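(* Let $G$, $\delta V$, $\rho$, $G^{BU}$, $U$ and $H=\begin{pmatrix}a&b\\c&d\end{pmatrix}$ (unitary, $abcd\neq0$, $d\in\mathbb{R}$, $\omega=-\det H$) be as in the context, and let $S$ be the scattering matrix of the facial quantum walk on $\mathbb{C}^{\delta V^{BU}}$. The vertex sets $\{x_0(f),\dots,x_{\kappa_f-1}(f)\}$, $f\in F^{ex}$, partition $\delta V^{BU}$. With respect to this partition $S$ is block diagonal, $S=\bigoplus_{f\in F^{ex}}S_f$, where, after identifying $\mathbb{C}^{\{x_0(f),\dots,x_{\kappa_f-1}(f)\}}$ with $\mathbb{C}^{\{0,\dots,\kappa_f-1\}}$ via $x_j(f)\leftrightarrow j$, $$S_f=bc\,P_f(\omega)\bigl(I_f-aP_f(\omega)\bigr)^{-1}+d\,I_f.$$ Here $I_f$ is the identity on $\mathbb{C}^{\{0,\dots,\kappa_f-1\}}$ and $(P_f(\omega)h)(j)=\omega^{\delta_{j-1}(f)}h(j-1)$, with indices taken modulo $\kappa_f$.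
   Context: Setting. $G=(V,E)$ is a finite connected simple graph and $\delta V\subseteq V$ a set of boundary vertices. To each $u\in\delta V$ a semi-infinite path (tail) is attached with origin $u$; let $\tau_u$ be the neighbour of $u$ on its tail. Let $\tilde N_u$ be the set of neighbours of $u$ in $G$, together with $\tau_u$ if $u\in\delta V$. A rotation $\rho=(\rho_u)_{u\in V}$ consists of cyclic permutations $\rho_u$ of $\tilde N_u$ of length $|\tilde N_u|$. Blow-up graph. $V^{BU}=\{(u,v):u\in V,\ v\in\tilde N_u\}$, with arcs $A^{BU}=A_{is}\sqcup A_{br}$: island arcs $(u,v)\to(u,\rho_u(v))$ and bridge arcs $(u,v)\to(v,u)$ for $u,v\in V$ adjacent in $G$. For a bridge arc $e$, $\bar e$ is its reverse. Let $\delta V^{BU}=\{(u,\tau_u):u\in\delta V\}$. To each $x\in\delta V^{BU}$ a tail is attached: incoming arcs $e^x_0,e^x_1,\dots$ with $t(e^x_0)=x$ and $t(e^x_{j+1})=o(e^x_j)$, and their reverses $\bar e^x_j$ (outgoing); $A_{tl}$ is the set of all tail arcs. Each $x\in V^{BU}$ has exactly one incoming and one outgoing island arc, and one further incoming and one further outgoing arc (a bridge and its reverse, or $e^x_0$ and $\bar e^x_0$ if $x\in\delta V^{BU}$). Walk. $U$ acts on $\mathbb{C}^{A^{BU}\cup A_{tl}}$ by $(U\Psi)(e^x_j)=\Psi(e^x_{j+1})$ and $(U\Psi)(\bar e^x_{j+1})=\Psi(\bar e^x_j)$. At every $x\in V^{BU}$, with incoming island arc $e^{is}_+$, other incoming arc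 $e^{br}_+$, outgoing island arc $e^{is}_-$ and other outgoing arc $e^{br}_-$, one has $\bigl((U\Psi)(e^{is}_-),(U\Psi)(e^{br}_-)\bigr)^{T}=H\bigl(\Psi(e^{is}_+),\Psi(e^{br}_+)\bigr)^{T}$. Scattering matrix. Given an inflow $\alpha\in\mathbb{C}^{\delta V^{BU}}$, set $\Psi_0(e^x_j)=\alpha(x)$ for all $x$ and $j$, and $\Psi_0=0$ elsewhere. Then $U^n\Psi_0$ converges pointwise to some $\Psi_\infty$ with $U\Psi_\infty=\Psi_\infty$ (this is a known result). The outflow is $\beta(x)=\Psi_\infty(\bar e^x_0)$. The scattering matrix $S$ is the matrix with $\beta=S\alpha$ for every $\alpha$; its existence is known. Facial walks. Define a bijection $\sigma$ of $A^{BU}$ as follows. A bridge arc $e$ is sent to the island arc starting at $t(e)$. An island arc ending at $x\notin\delta V^{BU}$ is sent to the bridge arc starting at $x$. An island arc ending at $x\in\delta V^{BU}$ is sent to the island arc starting at $x$. The facial closed walks are the cycles of $\sigma$. A facial walk is external if it passes through a vertex of $\delta V^{BU}$, and internal otherwise; $F^{ex}$ and $F^{in}$ denote the corresponding sets. For $f\in F^{ex}$, let $x_0(f),\dots,x_{\kappa_f-1}(f)$ be the vertices of $\delta V^{BU}$ visited by $f$, in cyclic order of traversal. Let $\delta_m(f)$ be the number of bridge arcs traversed by $f$ between $x_m(f)$ and $x_{m+1}(f)$ (indices mod $\kappa_f$). *)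

theory Defs
  imports "HOL-Analysis.Analysis" "HOL-Combinatorics.Permutations" "Jordan_Normal_Form.Matrix"
begin

text \<open>Extended neighbours: a genuine neighbour Nb v, or the tail neighbour Tl (= tau_u).\<close>
datatype 'v port = Nb 'v | Tl

definition simple_graph :: "'v set \<Rightarrow> ('v \<Rightarrow> 'v \<Rightarrow> bool) \<Rightarrow> bool" where
  "simple_graph V adj \<longleftrightarrow> finite V \<and> (\<forall>u v. adj u v \<longrightarrow> u \<in> V \<and> v \<in> V \<and> u \<noteq> v \<and> adj v u)"

definition graph_connected :: "'v set \<Rightarrow> ('v \<Rightarrow> 'v \<Rightarrow> bool) \<Rightarrow> bool" where
  "graph_connected V adj \<longleftrightarrow> V \<noteq> {} \<and> (\<forall>u\<in>V. \<forall>v\<in>V. (u, v) \<in> {(x, y). adj x y}\<^sup>*)"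

definition Nt :: "('v \<Rightarrow> 'v \<Rightarrow> bool) \<Rightarrow> 'v set \<Rightarrow> 'v \<Rightarrow> 'v port set" where
  "Nt adj dV u = Nb ` {v. adj u v} \<union> (if u \<in> dV then {Tl} else {})"

definition is_rotation :: "'v set \<Rightarrow> ('v \<Rightarrow> 'v \<Rightarrow> bool) \<Rightarrow> 'v set \<Rightarrow> ('v \<Rightarrow> 'v port \<Rightarrow> 'v port) \<Rightarrow> bool" where
  "is_rotation V adj dV rho \<longleftrightarrow> (\<forall>u\<in>V. rho u permutes Nt adj dV u \<and>
     (\<forall>p\<in>Nt adj dV u. \<forall>q\<in>Nt adj dV u. \<exists>k. (rho u ^^ k) p = q))"

type_synonym 'v bvert = "'v \<times> 'v port"

definition VBU :: "'v set \<Rightarrow> ('v \<Rightarrow> 'v \<Rightarrow> bool) \<Rightarrow> 'v set \<Rightarrow> 'v bvert set" where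
  "VBU V adj dV = {(u, p). u \<in> V \<and> p \<in> Nt adj dV u}"

definition dVBU :: "'v set \<Rightarrow> 'v bvert set" where
  "dVBU dV = {(u, Tl) | u. u \<in> dV}"

text \<open>Arcs, named by their origin: Isl x is the island arc x -> (u, rho_u p) for x = (u,p);
  Brg x is the bridge arc (u, Nb v) -> (v, Nb u); TIn x j = e^x_j (incoming tail arcs),
  TOut x j = reverse of e^x_j (outgoing tail arcs).\<close>
datatype 'x arc = Isl 'x | Brg 'x | TIn 'x nat | TOut 'x nat

definition ABU :: "'v set \<Rightarrow> ('v \<Rightarrow> 'v \<Rightarrow> bool) \<Rightarrow> 'v set \<Rightarrow> 'v bvert arc set" where
  "ABU V adj dV = Isl ` VBU V adj dV \<union> Brg ` {x \<in> VBU V adj dV. snd x \<noteq> Tl}"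

fun arc_end :: "('v \<Rightarrow> 'v port \<Rightarrow> 'v port) \<Rightarrow> 'v bvert arc \<Rightarrow> 'v bvert" where
  "arc_end rho (Isl (u, p)) = (u, rho u p)"
| "arc_end rho (Brg (u, Nb v)) = (v, Nb u)"
| "arc_end rho (Brg (u, Tl)) = (u, Tl)"
| "arc_end rho (TIn x j) = x"
| "arc_end rho (TOut x j) = x"

fun in_is :: "('v \<Rightarrow> 'v port \<Rightarrow> 'v port) \<Rightarrow> 'v bvert \<Rightarrow> 'v bvert arc" where
  "in_is rho (u, p) = Isl (u, inv_into UNIV (rho u) p)"

fun in_br :: "'v bvert \<Rightarrow> 'v bvert arc" where
  "in_br (u, Nb v) = Brg (v, Nb u)"
| "in_br (u, Tl) = TIn (u, Tl) 0"

definition Uwalk :: "'v set \<Rightarrow> ('v \<Rightarrow> 'v \<Rightarrow> bool) \<Rightarrow> 'v set \<Rightarrow> ('v \<Rightarrow> 'v port \<Rightarrow> 'v port)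
    \<Rightarrow> complex \<Rightarrow> complex \<Rightarrow> complex \<Rightarrow> complex
    \<Rightarrow> ('v bvert arc \<Rightarrow> complex) \<Rightarrow> ('v bvert arc \<Rightarrow> complex)" where
  "Uwalk V adj dV rho a b c d \<Psi> e = (case e of
      Isl x \<Rightarrow> if x \<in> VBU V adj dV then a * \<Psi> (in_is rho x) + b * \<Psi> (in_br x) else 0
    | Brg x \<Rightarrow> if x \<in> VBU V adj dV \<and> snd x \<noteq> Tl then c * \<Psi> (in_is rho x) + d * \<Psi> (in_br x) else 0
    | TIn x j \<Rightarrow> if x \<in> dVBU dV then \<Psi> (TIn x (Suc j)) else 0
    | TOut x j \<Rightarrow> if x \<in> dVBU dV then
         (case j of 0 \<Rightarrow> c * \<Psi> (in_is rho x) + d * \<Psi> (in_br x) | Suc i \<Rightarrow> \<Psi> (TOut x i))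
       else 0)"

definition Psi0 :: "'v set \<Rightarrow> ('v bvert \<Rightarrow> complex) \<Rightarrow> ('v bvert arc \<Rightarrow> complex)" where
  "Psi0 dV \<alpha> e = (case e of TIn x j \<Rightarrow> if x \<in> dVBU dV then \<alpha> x else 0 | _ \<Rightarrow> 0)"

text \<open>Unitarity of H = [[a,b],[c,d]]: H^* H = I.\<close>
definition unitary2 :: "complex \<Rightarrow> complex \<Rightarrow> complex \<Rightarrow> complex \<Rightarrow> bool" where
  "unitary2 a b c d \<longleftrightarrow> cnj a * a + cnj c * c = 1 \<and> cnj b * b + cnj d * d = 1
     \<and> cnj a * b + cnj c * d = 0"

definition sigma :: "'v set \<Rightarrow> ('v \<Rightarrow> 'v port \<Rightarrow> 'v port) \<Rightarrow> 'v bvert arc \<Rightarrow> 'v bvert arc" where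
  "sigma dV rho e = (case e of
      Brg x \<Rightarrow> Isl (arc_end rho (Brg x))
    | Isl x \<Rightarrow> (if arc_end rho (Isl x) \<in> dVBU dV then Isl (arc_end rho (Isl x))
               else Brg (arc_end rho (Isl x)))
    | _ \<Rightarrow> e)"

text \<open>Facial closed walks = cycles (orbits) of sigma on the arcs of the blow-up graph.\<close>
definition faces :: "'v set \<Rightarrow> ('v \<Rightarrow> 'v \<Rightarrow> bool) \<Rightarrow> 'v set \<Rightarrow> ('v \<Rightarrow> 'v port \<Rightarrow> 'v port) \<Rightarrow> 'v bvert arc set set" where
  "faces V adj dV rho = {{(sigma dV rho ^^ n) e | n. True} | e. e \<in> ABU V adj dV}"

definition bverts :: "'v set \<Rightarrow> ('v \<Rightarrow> 'v port \<Rightarrow> 'v port) \<Rightarrow> 'v bvert arc set \<Rightarrow> 'v bvert set" where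
  "bverts dV rho f = arc_end rho ` f \<inter> dVBU dV"

definition faces_ex :: "'v set \<Rightarrow> ('v \<Rightarrow> 'v \<Rightarrow> bool) \<Rightarrow> 'v set \<Rightarrow> ('v \<Rightarrow> 'v port \<Rightarrow> 'v port) \<Rightarrow> 'v bvert arc set set" where
  "faces_ex V adj dV rho = {f \<in> faces V adj dV rho. bverts dV rho f \<noteq> {}}"

text \<open>After visiting boundary vertex y, a facial walk leaves along the island arc Isl y.
  seg_len y = index of the arc (in the sequence sigma^n (Isl y)) that arrives at the next
  boundary vertex; next_bv y is that vertex; nbr y is the number of bridge arcs traversed in between.\<close>
definition seg_len :: "'v set \<Rightarrow> ('v \<Rightarrow> 'v port \<Rightarrow> 'v port) \<Rightarrow> 'v bvert \<Rightarrow> nat" where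
  "seg_len dV rho y = (LEAST k. arc_end rho ((sigma dV rho ^^ k) (Isl y)) \<in> dVBU dV)"

definition next_bv :: "'v set \<Rightarrow> ('v \<Rightarrow> 'v port \<Rightarrow> 'v port) \<Rightarrow> 'v bvert \<Rightarrow> 'v bvert" where
  "next_bv dV rho y = arc_end rho ((sigma dV rho ^^ seg_len dV rho y) (Isl y))"

definition nbr :: "'v set \<Rightarrow> ('v \<Rightarrow> 'v port \<Rightarrow> 'v port) \<Rightarrow> 'v bvert \<Rightarrow> nat" where
  "nbr dV rho y = card {k. k \<le> seg_len dV rho y \<and> (\<exists>z. (sigma dV rho ^^ k) (Isl y) = Brg z)}"

definition kappa :: "'v set \<Rightarrow> ('v \<Rightarrow> 'v port \<Rightarrow> 'v port) \<Rightarrow> 'v bvert arc set \<Rightarrow> nat" where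
  "kappa dV rho f = card (bverts dV rho f)"

definition xf :: "'v set \<Rightarrow> ('v \<Rightarrow> 'v port \<Rightarrow> 'v port) \<Rightarrow> 'v bvert \<Rightarrow> nat \<Rightarrow> 'v bvert" where
  "xf dV rho x0 j = (next_bv dV rho ^^ j) x0"

definition deltaf :: "'v set \<Rightarrow> ('v \<Rightarrow> 'v port \<Rightarrow> 'v port) \<Rightarrow> 'v bvert \<Rightarrow> nat \<Rightarrow> nat" where
  "deltaf dV rho x0 m = nbr dV rho (xf dV rho x0 m)"

definition Pmat :: "nat \<Rightarrow> (nat \<Rightarrow> nat) \<Rightarrow> complex \<Rightarrow> complex mat" where
  "Pmat k dl w = mat k k (\<lambda>(i, j). if i = Suc j mod k then w ^ dl j else 0)"

end

theory Submission
  imports Defs "Jordan_Normal_Form.Determinant"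
begin


locale qw =
  fixes V :: "'v set" and adj :: "'v \<Rightarrow> 'v \<Rightarrow> bool" and dV :: "'v set"
    and rho :: "'v \<Rightarrow> 'v port \<Rightarrow> 'v port" and a b c d :: complex
  assumes sg: "simple_graph V adj" and dVV: "dV \<subseteq> V"
    and rot: "is_rotation V adj dV rho"
    and un: "unitary2 a b c d" and nz: "a * b * c * d \<noteq> 0" and dr: "d \<in> \<real>"
begin

abbreviation "VB \<equiv> VBU V adj dV"
abbreviation "dB \<equiv> dVBU dV"
abbreviation "AA \<equiv> ABU V adj dV"
abbreviation "sgm \<equiv> sigma dV rho"
abbreviation "ae \<equiv> arc_end rho"

definition mi :: "'v bvert \<Rightarrow> 'v bvert" where
  "mi x = (fst x, inv_into UNIV (rho (fst x)) (snd x))"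
definition pl :: "'v bvert \<Rightarrow> 'v bvert" where
  "pl x = (fst x, rho (fst x) (snd x))"
definition bar :: "'v bvert \<Rightarrow> 'v bvert" where
  "bar x = (case snd x of Nb v \<Rightarrow> (v, Nb (fst x)) | Tl \<Rightarrow> x)"

lemma finV: "finite V" using sg by (simp add: simple_graph_def)
lemma adjD: "adj u v \<Longrightarrow> u \<in> V \<and> v \<in> V \<and> u \<noteq> v \<and> adj v u"
  using sg by (simp add: simple_graph_def)

lemma rho_perm: "u \<in> V \<Longrightarrow> rho u permutes Nt adj dV u"
  using rot by (simp add: is_rotation_def)

lemma rho_bij: "u \<in> V \<Longrightarrow> bij (rho u)"
  using rho_perm permutes_bij by blast

lemma rho_inv1: "u \<in> V \<Longrightarrow> rho u (inv_into UNIV (rho u) p) = p"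
  using rho_bij by (meson bij_inv_eq_iff)
lemma rho_inv2: "u \<in> V \<Longrightarrow> inv_into UNIV (rho u) (rho u p) = p"
  using rho_bij bij_is_inj inv_f_f by metis

lemma rho_in: "u \<in> V \<Longrightarrow> rho u p \<in> Nt adj dV u \<longleftrightarrow> p \<in> Nt adj dV u"
  by (metis rho_perm permutes_in_image)
lemma rhoinv_in: "u \<in> V \<Longrightarrow> inv_into UNIV (rho u) p \<in> Nt adj dV u \<longleftrightarrow> p \<in> Nt adj dV u"
  using rho_in rho_inv1 by metis

lemma Nt_Tl: "Tl \<in> Nt adj dV u \<longleftrightarrow> u \<in> dV" by (auto simp: Nt_def)
lemma Nt_Nb: "Nb v \<in> Nt adj dV u \<longleftrightarrow> adj u v" by (auto simp: Nt_def)

lemma VB_iff: "x \<in> VB \<longleftrightarrow> fst x \<in> V \<and> snd x \<in> Nt adj dV (fst x)"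
  by (cases x) (auto simp: VBU_def)

lemma dB_iff: "x \<in> dB \<longleftrightarrow> x \<in> VB \<and> snd x = Tl"
  using dVV by (cases x) (auto simp: dVBU_def VB_iff Nt_Tl)

lemma dB_VB: "x \<in> dB \<Longrightarrow> x \<in> VB" using dB_iff by blast

lemma finVB: "finite VB"
proof -
  have "VB \<subseteq> V \<times> (Nb ` V \<union> {Tl})"
    using adjD by (auto simp: VBU_def Nt_def split: if_splits)
  thus ?thesis using finV by (meson finite.emptyI finite.insertI finite_Un finite_SigmaI finite_imageI finite_subset)
qed

lemma finA: "finite AA" using finVB by (simp add: ABU_def)

lemma mi_VB: "x \<in> VB \<Longrightarrow> mi x \<in> VB" by (auto simp: mi_def VB_iff rhoinv_in)
lemma pl_VB: "x \<in> VB \<Longrightarrow> pl x \<in> VB" by (auto simp: pl_def VB_iff rho_in)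
lemma pl_mi: "x \<in> VB \<Longrightarrow> pl (mi x) = x" by (auto simp: pl_def mi_def VB_iff rho_inv1)
lemma mi_pl: "x \<in> VB \<Longrightarrow> mi (pl x) = x" by (auto simp: pl_def mi_def VB_iff rho_inv2)

lemma bar_VB: "x \<in> VB \<Longrightarrow> snd x \<noteq> Tl \<Longrightarrow> bar x \<in> VB \<and> snd (bar x) \<noteq> Tl \<and> bar (bar x) = x"
  by (cases x; cases "snd x") (auto simp: bar_def VB_iff Nt_Nb dest: adjD)

lemma ae_Isl: "ae (Isl x) = pl x" by (cases x) (simp add: pl_def)
lemma ae_Brg: "snd x \<noteq> Tl \<Longrightarrow> ae (Brg x) = bar x"
  by (cases x; cases "snd x") (auto simp: bar_def)

lemma sgm_Isl: "sgm (Isl x) = (if pl x \<in> dB then Isl (pl x) else Brg (pl x))"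
  by (simp add: sigma_def ae_Isl)
lemma sgm_Brg: "snd x \<noteq> Tl \<Longrightarrow> sgm (Brg x) = Isl (bar x)"
  by (simp add: sigma_def ae_Brg)

lemma A_iff: "e \<in> AA \<longleftrightarrow> (\<exists>x. e = Isl x \<and> x \<in> VB) \<or> (\<exists>x. e = Brg x \<and> x \<in> VB \<and> snd x \<noteq> Tl)"
  by (auto simp: ABU_def)

lemma sgm_A: "e \<in> AA \<Longrightarrow> sgm e \<in> AA"
proof -
  assume "e \<in> AA"
  then consider x where "e = Isl x" "x \<in> VB" | x where "e = Brg x" "x \<in> VB" "snd x \<noteq> Tl"
    unfolding A_iff by blast
  then show ?thesis
  proof cases
    case 1
    then show ?thesis using pl_VB[OF 1(2)] dB_iff[of "pl x"] by (auto simp: sgm_Isl ABU_def)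
  next
    case 2
    then show ?thesis using bar_VB[OF 2(2,3)] by (auto simp: sgm_Brg ABU_def)
  qed
qed

lemma sgm_inj: "inj_on sgm AA"
proof
  fix e1 e2 assume e1: "e1 \<in> AA" and e2: "e2 \<in> AA" and eq: "sgm e1 = sgm e2"
  from e1 consider x where "e1 = Isl x" "x \<in> VB" | x where "e1 = Brg x" "x \<in> VB" "snd x \<noteq> Tl"
    unfolding A_iff by blast
  then show "e1 = e2"
  proof cases
    case 1
    note x = 1
    from e2 consider y where "e2 = Isl y" "y \<in> VB" | y where "e2 = Brg y" "y \<in> VB" "snd y \<noteq> Tl"
      unfolding A_iff by blast
    then show ?thesis
    proof cases
      case 1
      then have "pl x = pl y" using eq x by (auto simp: sgm_Isl split: if_splits)
      then show ?thesis using x 1 mi_pl by metis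
    next
      case 2
      then have "pl x \<in> dB" "Isl (pl x) = Isl (bar y)" using eq x by (auto simp: sgm_Isl sgm_Brg split: if_splits)
      then show ?thesis using bar_VB[OF 2(2,3)] dB_iff by auto
    qed
  next
    case 2
    note x = 2
    from e2 consider y where "e2 = Isl y" "y \<in> VB" | y where "e2 = Brg y" "y \<in> VB" "snd y \<noteq> Tl"
      unfolding A_iff by blast
    then show ?thesis
    proof cases
      case 1
      then have "pl y \<in> dB" "Isl (pl y) = Isl (bar x)" using eq x by (auto simp: sgm_Isl sgm_Brg split: if_splits)
      then show ?thesis using bar_VB[OF x(2,3)] dB_iff by auto
    next
      case 2
      then have "bar x = bar y" using eq x by (auto simp: sgm_Brg)
      then show ?thesis using x 2 bar_VB by metis
    qed
  qed
qed

lemma funpow_A: "e \<in> AA \<Longrightarrow> (sgm ^^ n) e \<in> AA"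
  by (induction n) (auto simp: sgm_A)

lemma end_dB: "e \<in> AA \<Longrightarrow> ae e \<in> dB \<Longrightarrow> e = Isl (mi (ae e))"
proof -
  assume e: "e \<in> AA" and d: "ae e \<in> dB"
  from e consider x where "e = Isl x" "x \<in> VB" | x where "e = Brg x" "x \<in> VB" "snd x \<noteq> Tl"
    unfolding A_iff by blast
  then show ?thesis
  proof cases
    case 1 then show ?thesis by (simp add: ae_Isl mi_pl)
  next
    case 2 then show ?thesis using d bar_VB[OF 2(2,3)] by (simp add: ae_Brg dB_iff)
  qed
qed

lemma pre_Isl_dB: "e \<in> AA \<Longrightarrow> x \<in> dB \<Longrightarrow> sgm e = Isl x \<Longrightarrow> e = Isl (mi x)"
proof -
  assume e: "e \<in> AA" and d: "x \<in> dB" and s: "sgm e = Isl x"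
  from e consider y where "e = Isl y" "y \<in> VB" | y where "e = Brg y" "y \<in> VB" "snd y \<noteq> Tl"
    unfolding A_iff by blast
  then show ?thesis
  proof cases
    case 1 then show ?thesis using s mi_pl[OF 1(2)] by (auto simp: sgm_Isl split: if_splits)
  next
    case 2 then show ?thesis using s d bar_VB[OF 2(2,3)] by (auto simp: sgm_Brg dB_iff)
  qed
qed

end


lemma period_exists:
  assumes "finite S" "f ` S \<subseteq> S" "inj_on f S" "x \<in> S"
  shows "\<exists>p>0. (f ^^ p) x = x"
proof -
  have inS: "(f ^^ j) x \<in> S" for j using assms(2,4) by (induction j) auto
  have injn: "inj_on (f ^^ n) S" for n
  proof -
    have "f ` S = S" using endo_inj_surj assms by blast
    then have "bij_betw f S S" using assms(3) by (simp add: bij_betw_def)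
    then show ?thesis using bij_betw_funpow bij_betw_imp_inj_on by blast
  qed
  have "\<not> inj_on (\<lambda>j. (f ^^ j) x) {..card S}"
  proof
    assume "inj_on (\<lambda>j. (f ^^ j) x) {..card S}"
    then have "card {..card S} \<le> card S" using card_inj_on_le[of _ "{..card S}" S] inS assms(1) by blast
    then show False by simp
  qed
  then obtain i j where ij: "i \<le> card S" "j \<le> card S" "i \<noteq> j" "(f ^^ i) x = (f ^^ j) x"
    unfolding inj_on_def by blast
  define i' j' where "i' = min i j" and "j' = max i j"
  have "i' < j'" "(f ^^ i') x = (f ^^ j') x" using ij by (auto simp: i'_def j'_def min_def max_def)
  then have "(f ^^ i') x = (f ^^ i') ((f ^^ (j' - i')) x)"
    by (metis funpow_add le_add_diff_inverse less_imp_le_nat comp_apply)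
  then have "x = (f ^^ (j' - i')) x" using injn[of i'] inS assms(4) unfolding inj_on_def by metis
  then show ?thesis using \<open>i' < j'\<close> by (intro exI[of _ "j' - i'"]) auto
qed

lemma funpow_mult_period: "(f ^^ p) x = x \<Longrightarrow> (f ^^ (p * m)) x = x"
  by (induction m) (auto simp: funpow_add)

lemma funpow_mod_period: assumes "(f ^^ p) x = x" shows "(f ^^ j) x = (f ^^ (j mod p)) x"
proof -
  have "(f ^^ j) x = (f ^^ (j mod p + p * (j div p))) x" by simp
  also have "\<dots> = (f ^^ (j mod p)) ((f ^^ (p * (j div p))) x)" by (simp only: funpow_add comp_apply)
  also have "\<dots> = (f ^^ (j mod p)) x" using funpow_mult_period[OF assms] by simp
  finally show ?thesis .
qed

definition per :: "('a \<Rightarrow> 'a) \<Rightarrow> 'a \<Rightarrow> nat" where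
  "per f x = (LEAST p. 0 < p \<and> (f ^^ p) x = x)"

lemma per_props:
  assumes "0 < q" "(f ^^ q) x = x"
  shows "0 < per f x" "(f ^^ per f x) x = x"
    "\<And>m. 0 < m \<Longrightarrow> m < per f x \<Longrightarrow> (f ^^ m) x \<noteq> x"
proof -
  have "0 < per f x \<and> (f ^^ per f x) x = x"
    unfolding per_def by (rule LeastI[of _ q]) (use assms in auto)
  then show "0 < per f x" "(f ^^ per f x) x = x" by auto
  show "\<And>m. 0 < m \<Longrightarrow> m < per f x \<Longrightarrow> (f ^^ m) x \<noteq> x"
    unfolding per_def using not_less_Least by blast
qed

lemma per_cycle:
  assumes "0 < q" "(f ^^ q) x = x"
  shows "inj_on (\<lambda>j. (f ^^ j) x) {..<per f x}"
    "{(f ^^ j) x | j. True} = (\<lambda>j. (f ^^ j) x) ` {..<per f x}"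
    "card {(f ^^ j) x | j. True} = per f x"
    "bij_betw (\<lambda>j. (f ^^ j) x) {..<per f x} {(f ^^ j) x | j. True}"
proof -
  note P = per_props[OF assms]
  show inj: "inj_on (\<lambda>j. (f ^^ j) x) {..<per f x}"
    using inj_on_funpow_least[where f=f and n="per f x" and s=x] P by (simp add: lessThan_atLeast0)
  show im: "{(f ^^ j) x | j. True} = (\<lambda>j. (f ^^ j) x) ` {..<per f x}"
  proof
    show "{(f ^^ j) x | j. True} \<subseteq> (\<lambda>j. (f ^^ j) x) ` {..<per f x}"
    proof
      fix y assume "y \<in> {(f ^^ j) x | j. True}"
      then obtain j where "y = (f ^^ j) x" by auto
      then have "y = (f ^^ (j mod per f x)) x" using funpow_mod_period[OF P(2)] by simp
      then show "y \<in> (\<lambda>j. (f ^^ j) x) ` {..<per f x}" using P(1) by auto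
    qed
  qed auto
  show "card {(f ^^ j) x | j. True} = per f x" using im inj by (simp add: card_image)
  show "bij_betw (\<lambda>j. (f ^^ j) x) {..<per f x} {(f ^^ j) x | j. True}"
    using im inj by (simp add: bij_betw_def)
qed

context qw begin

abbreviation "sl \<equiv> seg_len dV rho"
abbreviation "nx \<equiv> next_bv dV rho"
abbreviation "nb \<equiv> nbr dV rho"

definition orbit :: "'v bvert arc \<Rightarrow> 'v bvert arc set" where
  "orbit e = {(sgm ^^ n) e | n. True}"

lemma per_sgm: "e \<in> AA \<Longrightarrow> \<exists>p>0. (sgm ^^ p) e = e"
  using period_exists[OF finA _ sgm_inj] sgm_A by blast

lemma orbit_shift: assumes "e \<in> AA" shows "orbit ((sgm ^^ n) e) = orbit e"
proof
  show "orbit ((sgm ^^ n) e) \<subseteq> orbit e"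
  proof
    fix e' assume "e' \<in> orbit ((sgm ^^ n) e)"
    then obtain m where "e' = (sgm ^^ m) ((sgm ^^ n) e)" by (auto simp: orbit_def)
    then have "e' = (sgm ^^ (m + n)) e" by (simp add: funpow_add)
    then show "e' \<in> orbit e" by (auto simp: orbit_def)
  qed
next
  obtain p where p: "0 < p" "(sgm ^^ p) e = e" using per_sgm[OF assms] by blast
  show "orbit e \<subseteq> orbit ((sgm ^^ n) e)"
  proof
    fix e' assume "e' \<in> orbit e"
    then obtain m where m: "e' = (sgm ^^ m) e" by (auto simp: orbit_def)
    have "(sgm ^^ (p * n)) e = e" using funpow_mult_period[OF p(2)] .
    moreover have "p * n \<ge> n" using p(1) by simp
    have "(sgm ^^ (m + (p * n - n))) ((sgm ^^ n) e) = (sgm ^^ (m + (p * n - n) + n)) e"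
      by (simp only: funpow_add comp_apply)
    moreover have "m + (p * n - n) + n = m + p * n" using \<open>p * n \<ge> n\<close> by linarith
    moreover have "(sgm ^^ (m + p * n)) e = (sgm ^^ m) e"
      using \<open>(sgm ^^ (p * n)) e = e\<close> by (simp only: funpow_add comp_apply)
    ultimately have "e' = (sgm ^^ (m + (p * n - n))) ((sgm ^^ n) e)" using m by simp
    then show "e' \<in> orbit ((sgm ^^ n) e)" by (auto simp: orbit_def)
  qed
qed

definition ex_seg :: "'v bvert \<Rightarrow> bool" where
  "ex_seg y \<longleftrightarrow> (\<exists>k. ae ((sgm ^^ k) (Isl y)) \<in> dB)"

lemma sgm_Isl_mi: "y \<in> dB \<Longrightarrow> sgm (Isl (mi y)) = Isl y"
  using pl_mi dB_VB by (simp add: sgm_Isl)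

lemma ex_seg_dB: assumes "y \<in> dB" shows "ex_seg y"
proof -
  have e: "Isl (mi y) \<in> AA" using assms mi_VB dB_VB by (auto simp: ABU_def)
  obtain p where p: "0 < p" "(sgm ^^ p) (Isl (mi y)) = Isl (mi y)" using per_sgm[OF e] by blast
  from p(1) obtain p' where p': "p = Suc p'" by (cases p) auto
  have "(sgm ^^ (p - 1)) (Isl y) = (sgm ^^ p) (Isl (mi y))"
    using p' sgm_Isl_mi[OF assms] by (simp add: funpow_swap1)
  then have "ae ((sgm ^^ (p - 1)) (Isl y)) = y" using p(2) assms by (simp add: ae_Isl pl_mi dB_VB)
  then show ?thesis using assms unfolding ex_seg_def by metis
qed

lemma seg_end: "ex_seg y \<Longrightarrow> ae ((sgm ^^ sl y) (Isl y)) \<in> dB"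
  unfolding ex_seg_def seg_len_def by (rule LeastI_ex)

lemma seg_before: "k < sl y \<Longrightarrow> ae ((sgm ^^ k) (Isl y)) \<notin> dB"
  unfolding seg_len_def by (rule not_less_Least)

lemma nx_dB: "ex_seg y \<Longrightarrow> nx y \<in> dB"
  using seg_end by (simp add: next_bv_def)

lemma seg_arc: assumes "ex_seg y" "y \<in> VB" shows "(sgm ^^ sl y) (Isl y) = Isl (mi (nx y))"
proof -
  have "Isl y \<in> AA" using assms by (auto simp: ABU_def)
  then show ?thesis using end_dB[OF funpow_A seg_end[OF assms(1)]] by (simp add: next_bv_def)
qed

lemma bv_visit:
  "y \<in> dB \<Longrightarrow> ae ((sgm ^^ n) (Isl (mi y))) \<in> dB \<Longrightarrow>
     \<exists>j. ae ((sgm ^^ n) (Isl (mi y))) = (nx ^^ j) y \<and> (0 < n \<longrightarrow> 0 < j)"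
proof (induction n arbitrary: y rule: less_induct)
  case (less n)
  show ?case
  proof (cases n)
    case 0
    then show ?thesis using less.prems pl_mi dB_VB by (auto simp: ae_Isl intro: exI[of _ 0])
  next
    case (Suc m)
    have eq1: "(sgm ^^ n) (Isl (mi y)) = (sgm ^^ m) (Isl y)"
      using Suc sgm_Isl_mi[OF less.prems(1)] by (simp add: funpow_swap1)
    have es: "ex_seg y" using ex_seg_dB less.prems(1) .
    have "\<not> m < sl y" using seg_before less.prems(2) eq1 by metis
    then obtain r where r: "m = sl y + r" using le_Suc_ex not_less by blast
    have "(sgm ^^ m) (Isl y) = (sgm ^^ r) ((sgm ^^ sl y) (Isl y))"
      using r by (simp add: funpow_add add.commute)
    also have "\<dots> = (sgm ^^ r) (Isl (mi (nx y)))" using seg_arc[OF es dB_VB[OF less.prems(1)]] by simp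
    finally have eq2: "(sgm ^^ n) (Isl (mi y)) = (sgm ^^ r) (Isl (mi (nx y)))" using eq1 by simp
    have "r < n" using r Suc by simp
    then obtain j where "ae ((sgm ^^ r) (Isl (mi (nx y)))) = (nx ^^ j) (nx y)"
      using less.IH[of r "nx y"] nx_dB[OF es] less.prems(2) eq2 by auto
    then have "ae ((sgm ^^ n) (Isl (mi y))) = (nx ^^ Suc j) y" using eq2 by (simp add: funpow_swap1)
    then show ?thesis by blast
  qed
qed

lemma bv_reach:
  "y \<in> dB \<Longrightarrow> (nx ^^ j) y \<in> dB \<and> (\<exists>n. (sgm ^^ n) (Isl (mi y)) = Isl (mi ((nx ^^ j) y)))"
proof (induction j)
  case 0
  then show ?case by (auto intro: exI[of _ 0])
next
  case (Suc j)
  define z where "z = (nx ^^ j) y"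
  have z: "z \<in> dB" and n: "\<exists>n. (sgm ^^ n) (Isl (mi y)) = Isl (mi z)" using Suc by (auto simp: z_def)
  then obtain n where n: "(sgm ^^ n) (Isl (mi y)) = Isl (mi z)" by blast
  have es: "ex_seg z" using ex_seg_dB z .
  have "(sgm ^^ (sl z + Suc n)) (Isl (mi y)) = (sgm ^^ sl z) (sgm ((sgm ^^ n) (Isl (mi y))))"
    by (simp add: funpow_add funpow_swap1)
  also have "\<dots> = Isl (mi (nx z))" using n sgm_Isl_mi[OF z] seg_arc[OF es dB_VB[OF z]] by simp
  finally have X: "(sgm ^^ (sl z + Suc n)) (Isl (mi y)) = Isl (mi (nx z))" .
  have "(nx ^^ Suc j) y = nx z" by (simp add: z_def)
  then show ?case using X nx_dB[OF es] by metis
qed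

lemma nx_period: assumes "y \<in> dB" shows "\<exists>q>0. (nx ^^ q) y = y"
proof -
  have e: "Isl (mi y) \<in> AA" using assms mi_VB dB_VB by (auto simp: ABU_def)
  obtain p where p: "0 < p" "(sgm ^^ p) (Isl (mi y)) = Isl (mi y)" using per_sgm[OF e] by blast
  have "ae ((sgm ^^ p) (Isl (mi y))) = y" using p(2) assms pl_mi dB_VB by (simp add: ae_Isl)
  then obtain j where "y = (nx ^^ j) y" "0 < j" using bv_visit[OF assms, of p] p(1) assms by auto
  then show ?thesis by metis
qed

lemma bverts_orbit: assumes "y \<in> dB"
  shows "bverts dV rho (orbit (Isl (mi y))) = {(nx ^^ j) y | j. True}"
proof
  show "bverts dV rho (orbit (Isl (mi y))) \<subseteq> {(nx ^^ j) y | j. True}"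
  proof
    fix z assume "z \<in> bverts dV rho (orbit (Isl (mi y)))"
    then obtain n where "z = ae ((sgm ^^ n) (Isl (mi y)))" "z \<in> dB" by (auto simp: bverts_def orbit_def)
    then show "z \<in> {(nx ^^ j) y | j. True}" using bv_visit[OF assms, of n] by auto
  qed
next
  show "{(nx ^^ j) y | j. True} \<subseteq> bverts dV rho (orbit (Isl (mi y)))"
  proof
    fix z assume "z \<in> {(nx ^^ j) y | j. True}"
    then obtain j where j: "z = (nx ^^ j) y" by auto
    then obtain n where "(sgm ^^ n) (Isl (mi y)) = Isl (mi z)" "z \<in> dB" using bv_reach[OF assms] by blast
    moreover have "ae (Isl (mi z)) = z" using \<open>z \<in> dB\<close> pl_mi dB_VB by (simp add: ae_Isl)
    ultimately show "z \<in> bverts dV rho (orbit (Isl (mi y)))"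
      unfolding bverts_def orbit_def by (metis (mono_tags, lifting) IntI image_eqI mem_Collect_eq)
  qed
qed

lemma faces_iff: "f \<in> faces V adj dV rho \<longleftrightarrow> (\<exists>e\<in>AA. f = orbit e)"
  by (auto simp: faces_def orbit_def)

lemma face_of: assumes "f \<in> faces V adj dV rho" "y \<in> bverts dV rho f"
  shows "y \<in> dB" "f = orbit (Isl (mi y))"
proof -
  show y: "y \<in> dB" using assms(2) by (simp add: bverts_def)
  obtain e where e: "e \<in> AA" "f = orbit e" using assms(1) faces_iff by blast
  then obtain n where "ae ((sgm ^^ n) e) = y" using assms(2) by (auto simp: bverts_def orbit_def)
  then have "(sgm ^^ n) e = Isl (mi y)" using end_dB[OF funpow_A[OF e(1)]] y by metis
  then show "f = orbit (Isl (mi y))" using orbit_shift[OF e(1), of n] e(2) by simp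
qed

lemma Isl_mi_A: "y \<in> dB \<Longrightarrow> Isl (mi y) \<in> AA"
  using mi_VB dB_VB by (auto simp: ABU_def)

lemma part1: "\<forall>y\<in>dB. \<exists>!f. f \<in> faces_ex V adj dV rho \<and> y \<in> bverts dV rho f"
proof
  fix y assume y: "y \<in> dB"
  have f: "orbit (Isl (mi y)) \<in> faces V adj dV rho" using faces_iff Isl_mi_A[OF y] by blast
  have yb: "y \<in> bverts dV rho (orbit (Isl (mi y)))" using bverts_orbit[OF y] by (auto intro: exI[of _ 0])
  show "\<exists>!f. f \<in> faces_ex V adj dV rho \<and> y \<in> bverts dV rho f"
  proof (rule ex1I[of _ "orbit (Isl (mi y))"])
    show "orbit (Isl (mi y)) \<in> faces_ex V adj dV rho \<and> y \<in> bverts dV rho (orbit (Isl (mi y)))"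
      using f yb by (auto simp: faces_ex_def)
  next
    fix f assume "f \<in> faces_ex V adj dV rho \<and> y \<in> bverts dV rho f"
    then show "f = orbit (Isl (mi y))" using face_of by (auto simp: faces_ex_def)
  qed
qed

end


lemma Least_shift2:
  assumes "\<not> P 0" "\<not> P (Suc 0)" "P n"
  shows "(LEAST k. P k) = Suc (Suc (LEAST k. P (Suc (Suc k))))"
proof -
  have "(LEAST k. P k) = Suc (LEAST k. P (Suc k))" using Least_Suc[of P n] assms by blast
  moreover have "P (Suc (n - 1))" using assms by (cases n) auto
  then have "(LEAST k. P (Suc k)) = Suc (LEAST k. P (Suc (Suc k)))"
    using Least_Suc[of "\<lambda>k. P (Suc k)" "n - 1"] assms by blast
  ultimately show ?thesis by simp
qed

lemma card_shift2:
  assumes "\<not> Q 0" "Q (Suc 0)"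
  shows "card {k. k \<le> Suc (Suc L) \<and> Q k} = Suc (card {k. k \<le> L \<and> Q (Suc (Suc k))})"
proof -
  have "{k. k \<le> Suc (Suc L) \<and> Q k} = insert (Suc 0) ((\<lambda>k. Suc (Suc k)) ` {k. k \<le> L \<and> Q (Suc (Suc k))})"
    (is "?l = ?r")
  proof
    show "?l \<subseteq> ?r"
    proof
      fix k assume k: "k \<in> ?l"
      show "k \<in> ?r"
      proof (cases k)
        case 0 then show ?thesis using k assms by simp
      next
        case (Suc k') note kk = this
        then show ?thesis
        proof (cases k')
          case 0 then show ?thesis using kk by simp
        next
          case (Suc k'') then show ?thesis using k kk by auto
        qed
      qed
    qed
  next
    show "?r \<subseteq> ?l" using assms by auto
  qed
  moreover have "finite ((\<lambda>k. Suc (Suc k)) ` {k. k \<le> L \<and> Q (Suc (Suc k))})" by simp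
  moreover have "Suc 0 \<notin> (\<lambda>k. Suc (Suc k)) ` {k. k \<le> L \<and> Q (Suc (Suc k))}" by auto
  moreover have "card ((\<lambda>k. Suc (Suc k)) ` {k. k \<le> L \<and> Q (Suc (Suc k))}) = card {k. k \<le> L \<and> Q (Suc (Suc k))}"
    by (rule card_image) (simp add: inj_on_def)
  ultimately show ?thesis by simp
qed

context qw begin

definition om :: complex where "om = b * c - a * d"

lemma nz': "a \<noteq> 0" "b \<noteq> 0" "c \<noteq> 0" "d \<noteq> 0" using nz by auto

lemma d_real: "cnj d = d" using dr by (simp add: Reals_cnj_iff)

lemma un': "cnj a * a + cnj c * c = 1" "cnj b * b + cnj d * d = 1" "cnj a * b + cnj c * d = 0"
  using un by (auto simp: unitary2_def)

lemma a_cb: "a * cnj b = - (c * d)"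
proof -
  have "cnj (cnj a * b + cnj c * d) = 0" using un'(3) by simp
  then show ?thesis using d_real by (simp add: algebra_simps add_eq_0_iff)
qed

lemma a_om: "a = - (d * om)"
proof -
  have "a * (cnj b * b) = - (c * d) * b" using a_cb by (metis mult.assoc)
  moreover have "cnj b * b = 1 - d * d" using un'(2) d_real by (simp add: algebra_simps)
  ultimately have h: "a * (1 - d * d) = - (c * d * b)" by simp
  have "a + d * om = a * (1 - d * d) + c * d * b" unfolding om_def by (simp add: algebra_simps)
  then have "a + d * om = 0" using h by simp
  then show ?thesis by (simp add: eq_neg_iff_add_eq_0)
qed

lemma nsq: "cnj z * z = complex_of_real (norm z ^ 2)"
  by (metis complex_norm_square mult.commute of_real_power)

lemma norm_bc: "norm b = norm c"
proof -
  have e1: "norm a ^ 2 + norm c ^ 2 = 1" using un'(1) nsq[of a] nsq[of c]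
    by (metis of_real_add of_real_eq_1_iff)
  have e2: "norm b ^ 2 + norm d ^ 2 = 1" using un'(2) nsq[of b] nsq[of d]
    by (metis of_real_add of_real_eq_1_iff)
  have "norm a * norm b = norm c * norm d" using arg_cong[OF a_cb, of norm] by (simp add: norm_mult)
  then have e3: "norm a ^ 2 * norm b ^ 2 = norm c ^ 2 * norm d ^ 2" by (metis power_mult_distrib)
  have "norm b ^ 2 - norm c ^ 2 = norm b ^ 2 * (norm a ^ 2 + norm c ^ 2) - norm c ^ 2 * (norm b ^ 2 + norm d ^ 2)"
    using e1 e2 by simp
  also have "\<dots> = 0" using e3 by (simp add: algebra_simps)
  finally have "norm b ^ 2 = norm c ^ 2" by simp
  then show ?thesis by (simp add: power2_eq_iff_nonneg)
qed

lemma om_cb: "om * cnj b = c"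
proof -
  have "om * (1 - d * d) = om + d * (- (d * om))" by (simp add: algebra_simps)
  also have "\<dots> = om + d * a" using a_om by simp
  also have "\<dots> = b * c" by (simp add: om_def algebra_simps)
  finally have "om * (1 - d * d) = b * c" .
  moreover have "1 - d * d = cnj b * b" using un'(2) d_real by (simp add: algebra_simps)
  ultimately have "(om * cnj b) * b = c * b" by (simp add: algebra_simps)
  then show ?thesis using nz'(2) by simp
qed

lemma norm_om: "norm om = 1"
proof -
  have "norm om * norm b = norm c" using arg_cong[OF om_cb, of norm] by (simp add: norm_mult)
  then have "norm om * norm c = 1 * norm c" using norm_bc by simp
  then show ?thesis using nz'(3) by (metis mult_cancel_right norm_eq_zero)
qed

lemma om_nz: "om \<noteq> 0" using norm_om by auto

lemma norm_a: "norm a < 1"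
proof -
  have "norm a ^ 2 + norm c ^ 2 = 1" using un'(1) nsq[of a] nsq[of c]
    by (metis of_real_add of_real_eq_1_iff)
  moreover have "norm c > 0" using nz'(3) by simp
  ultimately have "norm a ^ 2 < 1" by (smt (verit) zero_less_power)
  then show ?thesis by (smt (verit) norm_ge_zero power_less_imp_less_base one_power2)
qed

lemma unit_col: "norm (a * i + b * j) ^ 2 + norm (c * i + d * j) ^ 2 = norm i ^ 2 + norm j ^ 2"
proof -
  have "complex_of_real (norm (a * i + b * j) ^ 2 + norm (c * i + d * j) ^ 2)
      = cnj (a * i + b * j) * (a * i + b * j) + cnj (c * i + d * j) * (c * i + d * j)"
    by (simp only: nsq of_real_add)
  also have "\<dots> = (cnj a * a + cnj c * c) * (cnj i * i) + (cnj b * b + cnj d * d) * (cnj j * j)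
       + (cnj a * b + cnj c * d) * (cnj i * j) + cnj (cnj a * b + cnj c * d) * (cnj j * i)"
    by (simp add: algebra_simps)
  also have "\<dots> = cnj i * i + cnj j * j" using un' by simp
  also have "\<dots> = complex_of_real (norm i ^ 2 + norm j ^ 2)" by (simp only: nsq of_real_add)
  finally show ?thesis using of_real_eq_iff by blast
qed

lemma unit_col1: "norm (a * i) ^ 2 = norm i ^ 2 - norm c ^ 2 * norm i ^ 2"
  using unit_col[of i 0] by (simp add: norm_mult power_mult_distrib)

lemma seg_mi_dB: assumes "x \<in> dB"
  shows "ex_seg (mi x)" "sl (mi x) = 0" "nx (mi x) = x" "nb (mi x) = 0"
proof -
  have ae0: "ae ((sgm ^^ 0) (Isl (mi x))) = x" using assms pl_mi dB_VB by (simp add: ae_Isl)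
  then show "ex_seg (mi x)" using assms unfolding ex_seg_def by metis
  show s0: "sl (mi x) = 0" unfolding seg_len_def using ae0 assms by (metis (mono_tags, lifting) Least_eq_0)
  show "nx (mi x) = x" using ae0 s0 by (simp add: next_bv_def)
  have "{k. k \<le> 0 \<and> (\<exists>z. (sgm ^^ k) (Isl (mi x)) = Brg z)} = {}" by auto
  then show "nb (mi x) = 0" using s0 by (simp add: nbr_def)
qed

lemma seg_inner: assumes x: "x \<in> VB" "snd x \<noteq> Tl"
  shows "ex_seg (mi x) \<longleftrightarrow> ex_seg (bar x)"
    and "ex_seg (bar x) \<Longrightarrow> sl (mi x) = Suc (Suc (sl (bar x)))"
    and "ex_seg (bar x) \<Longrightarrow> nx (mi x) = nx (bar x)"
    and "ex_seg (bar x) \<Longrightarrow> nb (mi x) = Suc (nb (bar x))"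
proof -
  have xn: "x \<notin> dB" using x dB_iff by blast
  have s1: "sgm (Isl (mi x)) = Brg x" using pl_mi[OF x(1)] xn by (simp add: sgm_Isl)
  have s2: "sgm (Brg x) = Isl (bar x)" using sgm_Brg x(2) .
  have sh: "(sgm ^^ Suc (Suc k)) (Isl (mi x)) = (sgm ^^ k) (Isl (bar x))" for k
    using s1 s2 by (simp add: funpow_swap1)
  have n0: "ae ((sgm ^^ 0) (Isl (mi x))) \<notin> dB" using pl_mi[OF x(1)] xn by (simp add: ae_Isl)
  have n1: "ae ((sgm ^^ Suc 0) (Isl (mi x))) \<notin> dB" using s1 ae_Brg[OF x(2)] bar_VB[OF x] dB_iff by simp
  show "ex_seg (mi x) \<longleftrightarrow> ex_seg (bar x)"
  proof
    assume "ex_seg (mi x)"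
    then obtain k where k: "ae ((sgm ^^ k) (Isl (mi x))) \<in> dB" by (auto simp: ex_seg_def)
    have "k \<noteq> 0" using n0 k by metis
    moreover have "k \<noteq> Suc 0" using n1 k by metis
    ultimately
    obtain k' where "k = Suc (Suc k')" by (metis not0_implies_Suc)
    then show "ex_seg (bar x)" using k sh unfolding ex_seg_def by metis
  next
    assume "ex_seg (bar x)"
    then obtain k where k: "ae ((sgm ^^ k) (Isl (bar x))) \<in> dB" by (auto simp: ex_seg_def)
    then show "ex_seg (mi x)" using sh unfolding ex_seg_def by metis
  qed
  assume eb: "ex_seg (bar x)"
  then obtain k where k: "ae ((sgm ^^ k) (Isl (bar x))) \<in> dB" by (auto simp: ex_seg_def)
  have L: "(LEAST k. ae ((sgm ^^ k) (Isl (mi x))) \<in> dB) = Suc (Suc (LEAST k. ae ((sgm ^^ Suc (Suc k)) (Isl (mi x))) \<in> dB))"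
    by (rule Least_shift2[where n="Suc (Suc k)"]) (use n0 n1 k sh in auto)
  show sl: "sl (mi x) = Suc (Suc (sl (bar x)))"
    unfolding seg_len_def L sh ..
  show "nx (mi x) = nx (bar x)" unfolding next_bv_def sl sh ..
  have "nb (mi x) = card {j. j \<le> Suc (Suc (sl (bar x))) \<and> (\<exists>z. (sgm ^^ j) (Isl (mi x)) = Brg z)}"
    unfolding nbr_def sl ..
  also have "\<dots> = Suc (card {j. j \<le> sl (bar x) \<and> (\<exists>z. (sgm ^^ Suc (Suc j)) (Isl (mi x)) = Brg z)})"
    by (rule card_shift2) (use s1 in auto)
  also have "\<dots> = Suc (nb (bar x))" unfolding nbr_def sh ..
  finally show "nb (mi x) = Suc (nb (bar x))" .
qed

end

locale qwY = qw +
  fixes Y :: "'a bvert \<Rightarrow> complex" and \<alpha> :: "'a bvert \<Rightarrow> complex"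
  assumes Yrec: "\<And>x. x \<in> dB \<Longrightarrow> Y (nx x) = om ^ nb x * (a * Y x + b * \<alpha> x)"
begin

definition g :: "'a bvert \<Rightarrow> complex" where
  "g w = (if ex_seg w then inverse om ^ nb w * Y (nx w) else 0)"

definition Phi :: "'a bvert arc \<Rightarrow> complex" where
  "Phi e = (case e of Isl w \<Rightarrow> g w | Brg x \<Rightarrow> (g (bar x) - a * g (mi (bar x))) / b | _ \<Rightarrow> 0)"

lemma g_B: assumes "x \<in> dB" shows "g (mi x) = Y x" "g x = a * g (mi x) + b * \<alpha> x"
proof -
  show gm: "g (mi x) = Y x" using seg_mi_dB[OF assms] by (simp add: g_def)
  have "g x = inverse om ^ nb x * Y (nx x)" using ex_seg_dB[OF assms] by (simp add: g_def)
  also have "\<dots> = (inverse om ^ nb x * om ^ nb x) * (a * Y x + b * \<alpha> x)" using Yrec[OF assms] by simp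
  also have "\<dots> = a * Y x + b * \<alpha> x" using om_nz by (simp add: power_mult_distrib[symmetric])
  finally show "g x = a * g (mi x) + b * \<alpha> x" using gm by simp
qed

lemma g_I: assumes x: "x \<in> VB" "snd x \<noteq> Tl" shows "g (bar x) = om * g (mi x)"
proof (cases "ex_seg (bar x)")
  case True
  note S = seg_inner[OF x]
  have "g (mi x) = inverse om ^ Suc (nb (bar x)) * Y (nx (bar x))"
    using True S by (simp add: g_def)
  then have "om * g (mi x) = (om * inverse om) * (inverse om ^ nb (bar x) * Y (nx (bar x)))"
    by (simp only: power_Suc mult.assoc)
  also have "\<dots> = inverse om ^ nb (bar x) * Y (nx (bar x))" using om_nz by simp
  also have "\<dots> = g (bar x)" using True by (simp add: g_def)
  finally show ?thesis by simp
next
  case False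
  then show ?thesis using seg_inner(1)[OF x] by (simp add: g_def)
qed

lemma stat1: assumes "x \<in> VB"
  shows "Phi (Isl x) = a * Phi (Isl (mi x)) + b * (if snd x = Tl then \<alpha> x else Phi (Brg (bar x)))"
proof (cases "snd x = Tl")
  case True
  then have "x \<in> dB" using assms dB_iff by blast
  then show ?thesis using g_B True by (simp add: Phi_def)
next
  case False
  have "bar (bar x) = x" using bar_VB[OF assms False] by simp
  then show ?thesis using False nz'(2) by (simp add: Phi_def)
qed

lemma stat2: assumes x: "x \<in> VB" "snd x \<noteq> Tl"
  shows "Phi (Brg x) = c * Phi (Isl (mi x)) + d * Phi (Brg (bar x))"
proof -
  have bb: "bar (bar x) = x" "bar x \<in> VB" "snd (bar x) \<noteq> Tl" using bar_VB[OF x] by auto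
  have g1: "g (bar x) = om * g (mi x)" using g_I[OF x] .
  have g2: "g x = om * g (mi (bar x))" using g_I[OF bb(2,3)] bb(1) by simp
  have "Phi (Brg x) = (om * g (mi x) - a * g (mi (bar x))) / b" using g1 by (simp add: Phi_def)
  moreover have "c * Phi (Isl (mi x)) + d * Phi (Brg (bar x))
     = c * g (mi x) + d * ((om * g (mi (bar x)) - a * g (mi x)) / b)"
    using g2 bb(1) by (simp add: Phi_def)
  moreover have "(om * g (mi x) - a * g (mi (bar x))) / b = c * g (mi x) + d * ((om * g (mi (bar x)) - a * g (mi x)) / b)"
  proof -
    define G1 where "G1 = g (mi x)"
    define G2 where "G2 = g (mi (bar x))"
    have "om * G1 - a * G2 - (b * c * G1 + d * (om * G2 - a * G1))
       = (om - (b * c - a * d)) * G1 + (- a - d * om) * G2" by (simp add: algebra_simps)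
    also have "\<dots> = 0"
    proof -
      have z1: "om - (b * c - a * d) = 0" by (simp add: om_def)
      have z2: "- a - d * om = 0" by (subst a_om) simp
      show ?thesis using z1 z2 by simp
    qed
    finally have "om * g (mi x) - a * g (mi (bar x)) = b * c * g (mi x) + d * (om * g (mi (bar x)) - a * g (mi x))"
      unfolding G1_def G2_def by simp
    then show ?thesis using nz'(2) by (simp add: field_simps)
  qed
  ultimately show ?thesis by simp
qed

end


context qw begin

lemma in_is_eq: "in_is rho x = Isl (mi x)" by (cases x) (simp add: mi_def)
lemma in_br_Tl: "snd x = Tl \<Longrightarrow> in_br x = TIn x 0" by (cases x) auto
lemma in_br_Nb: "snd x \<noteq> Tl \<Longrightarrow> in_br x = Brg (bar x)"
  by (cases x; cases "snd x") (auto simp: bar_def)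

lemma mi_bij: "bij_betw mi VB VB"
proof (rule bij_betw_imageI)
  show "inj_on mi VB" by (metis inj_onI pl_mi)
  show "mi ` VB = VB"
  proof
    show "mi ` VB \<subseteq> VB" using mi_VB by auto
    show "VB \<subseteq> mi ` VB" using mi_pl pl_VB by (metis image_eqI subsetI)
  qed
qed

definition VBi where "VBi = {x \<in> VB. snd x \<noteq> Tl}"

lemma bar_bij: "bij_betw bar VBi VBi"
proof (rule bij_betw_imageI)
  show "inj_on bar VBi"
  proof (rule inj_onI)
    fix x y assume xy: "x \<in> VBi" "y \<in> VBi" "bar x = bar y"
    then have "x \<in> VB" "snd x \<noteq> Tl" "y \<in> VB" "snd y \<noteq> Tl" by (auto simp: VBi_def)
    then have "bar (bar x) = x" "bar (bar y) = y" using bar_VB by blast+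
    then show "x = y" using xy(3) by metis
  qed
  show "bar ` VBi = VBi"
  proof
    show "bar ` VBi \<subseteq> VBi" using bar_VB by (auto simp: VBi_def)
    show "VBi \<subseteq> bar ` VBi"
    proof
      fix x assume "x \<in> VBi"
      then have "bar x \<in> VBi" "bar (bar x) = x" using bar_VB by (auto simp: VBi_def)
      then show "x \<in> bar ` VBi" by (metis image_eqI)
    qed
  qed
qed

lemma VB_split: "VB = VBi \<union> dB" "VBi \<inter> dB = {}"
  using dB_iff by (auto simp: VBi_def)

lemma finVBi: "finite VBi" using finVB by (simp add: VBi_def)
lemma findB: "finite dB" using finVB VB_split by (metis finite_Un)

end

context qwY begin

abbreviation "UW \<equiv> Uwalk V adj dV rho a b c d"
definition Psi :: "nat \<Rightarrow> 'a bvert arc \<Rightarrow> complex" where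
  "Psi n = (UW ^^ n) (Psi0 dV \<alpha>)"

lemma Psi_Suc: "Psi (Suc n) = UW (Psi n)" by (simp add: Psi_def)

lemma W_TIn: "x \<in> dB \<Longrightarrow> Psi n (TIn x j) = \<alpha> x"
proof (induction n arbitrary: j)
  case 0 then show ?case by (simp add: Psi_def Psi0_def)
next
  case (Suc n) then show ?case by (simp add: Psi_Suc Uwalk_def)
qed

lemma W_Isl: assumes "x \<in> VB"
  shows "Psi (Suc n) (Isl x) = a * Psi n (Isl (mi x)) + b * (if snd x = Tl then \<alpha> x else Psi n (Brg (bar x)))"
proof (cases "snd x = Tl")
  case True
  then have "x \<in> dB" using assms dB_iff by blast
  then show ?thesis using True assms by (simp add: Psi_Suc Uwalk_def in_is_eq in_br_Tl W_TIn)
next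
  case False
  then show ?thesis using assms by (simp add: Psi_Suc Uwalk_def in_is_eq in_br_Nb)
qed

lemma W_Brg: assumes "x \<in> VB" "snd x \<noteq> Tl"
  shows "Psi (Suc n) (Brg x) = c * Psi n (Isl (mi x)) + d * Psi n (Brg (bar x))"
  using assms by (simp add: Psi_Suc Uwalk_def in_is_eq in_br_Nb)

lemma W_TOut: assumes "x \<in> dB"
  shows "Psi (Suc n) (TOut x 0) = c * Psi n (Isl (mi x)) + d * \<alpha> x"
  using assms dB_iff[of x] by (simp add: Psi_Suc Uwalk_def in_is_eq in_br_Tl W_TIn)

definition E :: "nat \<Rightarrow> 'a bvert arc \<Rightarrow> complex" where
  "E n e = Psi n e - Phi e"

lemma E_Isl: assumes "x \<in> VB"
  shows "E (Suc n) (Isl x) = a * E n (Isl (mi x)) + b * (if snd x = Tl then 0 else E n (Brg (bar x)))"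
  using W_Isl[OF assms, of n] stat1[OF assms] by (simp add: E_def algebra_simps)

lemma E_Brg: assumes "x \<in> VB" "snd x \<noteq> Tl"
  shows "E (Suc n) (Brg x) = c * E n (Isl (mi x)) + d * E n (Brg (bar x))"
  using W_Brg[OF assms, of n] stat2[OF assms] by (simp add: E_def algebra_simps)

definition En :: "nat \<Rightarrow> real" where
  "En n = (\<Sum>x\<in>VB. norm (E n (Isl x)) ^ 2) + (\<Sum>x\<in>VBi. norm (E n (Brg x)) ^ 2)"

definition Lk :: "nat \<Rightarrow> real" where
  "Lk n = (\<Sum>x\<in>dB. norm (E n (Isl (mi x))) ^ 2)"

lemma energy: "En (Suc n) + norm c ^ 2 * Lk n = En n"
proof -
  define i where "i x = E n (Isl (mi x))" for x
  define j where "j x = E n (Brg (bar x))" for x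
  have s1: "(\<Sum>x\<in>VB. norm (E (Suc n) (Isl x)) ^ 2)
      = (\<Sum>x\<in>VBi. norm (a * i x + b * j x) ^ 2) + (\<Sum>x\<in>dB. norm (a * i x) ^ 2)"
  proof -
    have "(\<Sum>x\<in>VB. norm (E (Suc n) (Isl x)) ^ 2)
        = (\<Sum>x\<in>VBi. norm (E (Suc n) (Isl x)) ^ 2) + (\<Sum>x\<in>dB. norm (E (Suc n) (Isl x)) ^ 2)"
      using VB_split finVBi findB by (simp add: sum.union_disjoint)
    moreover have "(\<Sum>x\<in>VBi. norm (E (Suc n) (Isl x)) ^ 2) = (\<Sum>x\<in>VBi. norm (a * i x + b * j x) ^ 2)"
      by (rule sum.cong) (auto simp: VBi_def E_Isl i_def j_def)
    moreover have "(\<Sum>x\<in>dB. norm (E (Suc n) (Isl x)) ^ 2) = (\<Sum>x\<in>dB. norm (a * i x) ^ 2)"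
      by (rule sum.cong) (auto simp: E_Isl i_def dB_iff)
    ultimately show ?thesis by simp
  qed
  have s2: "(\<Sum>x\<in>VBi. norm (E (Suc n) (Brg x)) ^ 2) = (\<Sum>x\<in>VBi. norm (c * i x + d * j x) ^ 2)"
    by (rule sum.cong) (auto simp: VBi_def E_Brg i_def j_def)
  have "En (Suc n) = (\<Sum>x\<in>VBi. norm (a * i x + b * j x) ^ 2 + norm (c * i x + d * j x) ^ 2)
       + (\<Sum>x\<in>dB. norm (a * i x) ^ 2)"
    unfolding En_def s1 s2 by (simp add: sum.distrib)
  also have "\<dots> = (\<Sum>x\<in>VBi. norm (i x) ^ 2 + norm (j x) ^ 2) + (\<Sum>x\<in>dB. norm (i x) ^ 2 - norm c ^ 2 * norm (i x) ^ 2)"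
    by (simp add: unit_col unit_col1)
  also have "\<dots> = ((\<Sum>x\<in>VBi. norm (i x) ^ 2) + (\<Sum>x\<in>dB. norm (i x) ^ 2)) + (\<Sum>x\<in>VBi. norm (j x) ^ 2)
       - norm c ^ 2 * (\<Sum>x\<in>dB. norm (i x) ^ 2)"
    by (simp add: sum.distrib sum_subtractf sum_distrib_left)
  also have "(\<Sum>x\<in>VBi. norm (i x) ^ 2) + (\<Sum>x\<in>dB. norm (i x) ^ 2) = (\<Sum>x\<in>VB. norm (i x) ^ 2)"
    using VB_split finVBi findB by (simp add: sum.union_disjoint)
  also have "(\<Sum>x\<in>VB. norm (i x) ^ 2) = (\<Sum>x\<in>VB. norm (E n (Isl x)) ^ 2)"
    unfolding i_def using sum.reindex_bij_betw[OF mi_bij, of "\<lambda>y. norm (E n (Isl y)) ^ 2"] by simp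
  also have "(\<Sum>x\<in>VBi. norm (j x) ^ 2) = (\<Sum>x\<in>VBi. norm (E n (Brg x)) ^ 2)"
    unfolding j_def using sum.reindex_bij_betw[OF bar_bij, of "\<lambda>y. norm (E n (Brg y)) ^ 2"] by simp
  finally show ?thesis unfolding En_def Lk_def i_def by simp
qed

lemma En_nonneg: "0 \<le> En n" by (simp add: En_def sum_nonneg)
lemma Lk_nonneg: "0 \<le> Lk n" by (simp add: Lk_def sum_nonneg)

lemma tele: "En N + norm c ^ 2 * (\<Sum>n<N. Lk n) = En 0"
proof (induction N)
  case 0 then show ?case by simp
next
  case (Suc N)
  then show ?case using energy[of N] by (simp add: algebra_simps)
qed

lemma E_lim: assumes "x \<in> dB" shows "(\<lambda>n. E n (Isl (mi x))) \<longlonglongrightarrow> 0"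
proof -
  have cpos: "norm c ^ 2 > 0" using nz'(3) by simp
  have bnd: "(\<Sum>n<N. norm (E n (Isl (mi x))) ^ 2) \<le> En 0 / norm c ^ 2" for N
  proof -
    have "(\<Sum>n<N. norm (E n (Isl (mi x))) ^ 2) \<le> (\<Sum>n<N. Lk n)"
    proof (rule sum_mono)
      fix n
      show "norm (E n (Isl (mi x))) ^ 2 \<le> Lk n"
        unfolding Lk_def using assms findB
        by (intro member_le_sum[where f="\<lambda>x. norm (E n (Isl (mi x))) ^ 2"]) auto
    qed
    also have "\<dots> \<le> En 0 / norm c ^ 2"
      using tele[of N] En_nonneg[of N] cpos by (simp add: field_simps)
    finally show ?thesis .
  qed
  have "summable (\<lambda>n. norm (E n (Isl (mi x))) ^ 2)"
    by (rule summableI_nonneg_bounded[where x="En 0 / norm c ^ 2"]) (use bnd in auto)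
  then have "(\<lambda>n. norm (E n (Isl (mi x))) ^ 2) \<longlonglongrightarrow> 0" by (rule summable_LIMSEQ_zero)
  then have "(\<lambda>n. sqrt (norm (E n (Isl (mi x))) ^ 2)) \<longlonglongrightarrow> sqrt 0" by (rule tendsto_real_sqrt)
  then have "(\<lambda>n. norm (E n (Isl (mi x)))) \<longlonglongrightarrow> 0" by simp
  then show ?thesis by (rule tendsto_norm_zero_cancel)
qed

lemma out_lim: assumes "x \<in> dB"
  shows "(\<lambda>n. Psi n (TOut x 0)) \<longlonglongrightarrow> c * Y x + d * \<alpha> x"
proof -
  have eq: "Psi (Suc n) (TOut x 0) = c * E n (Isl (mi x)) + (c * Y x + d * \<alpha> x)" for n
    using W_TOut[OF assms, of n] g_B(1)[OF assms] by (simp add: E_def Phi_def algebra_simps)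
  have "(\<lambda>n. c * E n (Isl (mi x)) + (c * Y x + d * \<alpha> x)) \<longlonglongrightarrow> c * 0 + (c * Y x + d * \<alpha> x)"
    by (intro tendsto_intros E_lim[OF assms])
  then have "(\<lambda>n. Psi (Suc n) (TOut x 0)) \<longlonglongrightarrow> c * Y x + d * \<alpha> x" unfolding eq by simp
  then show ?thesis by (rule LIMSEQ_imp_Suc)
qed

end


lemma suc_mod_inj: "j < k \<Longrightarrow> j' < k \<Longrightarrow> Suc j mod k = Suc j' mod k \<Longrightarrow> j = j'"
proof -
  assume a: "j < k" "j' < k" "Suc j mod k = Suc j' mod k"
  have e: "Suc i mod k = (if Suc i = k then 0 else Suc i)" if "i < k" for i
    using that by (simp add: Suc_le_eq le_neq_implies_less)
  show "j = j'" using a e[of j] e[of j'] by (auto split: if_splits)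
qed

lemma mod_pred: "j0 < k \<Longrightarrow> Suc ((j0 + k - 1) mod k) mod k = j0"
proof -
  assume "j0 < k"
  then have "Suc ((j0 + k - 1) mod k) mod k = Suc (j0 + k - 1) mod k" by (simp add: mod_Suc_eq)
  also have "Suc (j0 + k - 1) = j0 + k" using \<open>j0 < k\<close> by simp
  also have "(j0 + k) mod k = j0" using \<open>j0 < k\<close> by simp
  finally show ?thesis .
qed

lemma cyc_zero:
  fixes z :: "nat \<Rightarrow> complex"
  assumes k: "0 < k" and a: "norm a < 1" and w: "\<And>j. j < k \<Longrightarrow> norm (w j) = 1"
    and r: "\<And>j. j < k \<Longrightarrow> z (Suc j mod k) = w j * (a * z j)"
  shows "\<And>j. j < k \<Longrightarrow> z j = 0"
proof -
  obtain j0 where j0: "j0 \<in> {..<k}" "Max ((\<lambda>j. norm (z j)) ` {..<k}) = norm (z j0)"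
    using obtains_MAX[of "{..<k}" "\<lambda>j. norm (z j)"] k by auto
  have le: "norm (z j) \<le> norm (z j0)" if "j < k" for j
    using j0(2) Max_ge[of "(\<lambda>j. norm (z j)) ` {..<k}" "norm (z j)"] that by auto
  define j1 where "j1 = (j0 + k - 1) mod k"
  have j1: "j1 < k" using k by (simp add: j1_def)
  have "Suc j1 mod k = j0" using mod_pred j0(1) by (simp add: j1_def)
  then have "z j0 = w j1 * (a * z j1)" using r[OF j1] by simp
  then have "norm (z j0) = norm a * norm (z j1)" using w[OF j1] by (simp add: norm_mult)
  also have "\<dots> \<le> norm a * norm (z j0)" using le[OF j1] by (simp add: mult_left_mono)
  finally have "norm (z j0) \<le> 0" using a
    by (metis diff_ge_0_iff_ge le_cases mult_le_cancel_right1 nle_le norm_ge_zero not_le)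
  then show "\<And>j. j < k \<Longrightarrow> z j = 0" using le by (metis norm_le_zero_iff order_trans)
qed

lemma cyc_unique:
  fixes u v :: "nat \<Rightarrow> complex"
  assumes k: "0 < k" and a: "norm a < 1" and w: "\<And>j. j < k \<Longrightarrow> norm (w j) = 1"
    and ru: "\<And>j. j < k \<Longrightarrow> u (Suc j mod k) = w j * (a * u j + \<beta> j)"
    and rv: "\<And>j. j < k \<Longrightarrow> v (Suc j mod k) = w j * (a * v j + \<beta> j)"
  shows "\<And>j. j < k \<Longrightarrow> u j = v j"
proof -
  have "\<And>j. j < k \<Longrightarrow> (\<lambda>j. u j - v j) j = 0"
  proof (rule cyc_zero[OF k a w])
    fix j assume "j < k"
    then show "u (Suc j mod k) - v (Suc j mod k) = w j * (a * (u j - v j))"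
      using ru rv by (simp add: algebra_simps)
  qed auto
  then show "\<And>j. j < k \<Longrightarrow> u j = v j" by simp
qed

lemma mv_index: assumes "A \<in> carrier_mat k k" "v \<in> carrier_vec k" "i < k"
  shows "(A *\<^sub>v v) $ i = (\<Sum>j<k. A $$ (i, j) * v $ j)"
  using assms by (auto simp: scalar_prod_def atLeast0LessThan intro: sum.cong)

lemma Pmat_carrier: "Pmat k dl w \<in> carrier_mat k k" by (simp add: Pmat_def)

lemma Pmat_dims[simp]: "dim_row (Pmat k dl w) = k" "dim_col (Pmat k dl w) = k" by (simp_all add: Pmat_def)

lemma Pmat_index: "i < k \<Longrightarrow> j < k \<Longrightarrow> Pmat k dl w $$ (i, j) = (if i = Suc j mod k then w ^ dl j else 0)"
  by (simp add: Pmat_def)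

lemma Pmat_mv: assumes "v \<in> carrier_vec k" "j0 < k"
  shows "(Pmat k dl w *\<^sub>v v) $ (Suc j0 mod k) = w ^ dl j0 * v $ j0"
proof -
  have k: "0 < k" using assms by simp
  have "(Pmat k dl w *\<^sub>v v) $ (Suc j0 mod k) = (\<Sum>j<k. Pmat k dl w $$ (Suc j0 mod k, j) * v $ j)"
    using mv_index[OF Pmat_carrier assms(1)] k by simp
  also have "\<dots> = (\<Sum>j<k. if j = j0 then w ^ dl j * v $ j else 0)"
  proof (rule sum.cong)
    fix j assume "j \<in> {..<k}"
    then show "Pmat k dl w $$ (Suc j0 mod k, j) * v $ j = (if j = j0 then w ^ dl j * v $ j else 0)"
      using suc_mod_inj[of j0 k j] assms(2) k by (auto simp: Pmat_index)
  qed simp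
  also have "\<dots> = w ^ dl j0 * v $ j0" using assms(2) by simp
  finally show ?thesis .
qed

lemma IaP_mv: assumes "v \<in> carrier_vec k" "i < k"
  shows "((1\<^sub>m k - a \<cdot>\<^sub>m Pmat k dl w) *\<^sub>v v) $ i = v $ i - a * (Pmat k dl w *\<^sub>v v) $ i"
proof -
  have c: "1\<^sub>m k - a \<cdot>\<^sub>m Pmat k dl w \<in> carrier_mat k k"
    by (intro minus_carrier_mat smult_carrier_mat Pmat_carrier)
  have "((1\<^sub>m k - a \<cdot>\<^sub>m Pmat k dl w) *\<^sub>v v) $ i
      = (\<Sum>j<k. ((if i = j then 1 else 0) - a * Pmat k dl w $$ (i, j)) * v $ j)"
    using mv_index[OF c assms] assms by (auto intro!: sum.cong)
  also have "\<dots> = (\<Sum>j<k. (if i = j then v $ j else 0) - a * (Pmat k dl w $$ (i, j) * v $ j))"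
    by (intro sum.cong) (auto simp: algebra_simps)
  also have "\<dots> = (\<Sum>j<k. (if i = j then v $ j else 0)) - a * (\<Sum>j<k. Pmat k dl w $$ (i, j) * v $ j)"
    by (simp only: sum_subtractf sum_distrib_left)
  also have "\<dots> = v $ i - a * (Pmat k dl w *\<^sub>v v) $ i"
    using assms mv_index[OF Pmat_carrier assms(1,2)] by simp
  finally show ?thesis .
qed

lemma IaP_inv:
  fixes a w :: complex
  assumes k: "0 < k" and a: "norm a < 1" and w: "norm w = 1"
  shows "\<exists>M \<in> carrier_mat k k. (1\<^sub>m k - a \<cdot>\<^sub>m Pmat k dl w) * M = 1\<^sub>m k \<and> M * (1\<^sub>m k - a \<cdot>\<^sub>m Pmat k dl w) = 1\<^sub>m k"
proof -
  let ?A = "1\<^sub>m k - a \<cdot>\<^sub>m Pmat k dl w"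
  have c: "?A \<in> carrier_mat k k" by (intro minus_carrier_mat smult_carrier_mat Pmat_carrier)
  have "det ?A \<noteq> 0"
  proof
    assume "det ?A = 0"
    then obtain v where v: "v \<in> carrier_vec k" "v \<noteq> 0\<^sub>v k" "?A *\<^sub>v v = 0\<^sub>v k"
      using det_0_iff_vec_prod_zero[OF c] by blast
    have "\<And>j. j < k \<Longrightarrow> v $ j = 0"
    proof (rule cyc_zero[OF k a, where w="\<lambda>j. w ^ dl j"])
      show "\<And>j. j < k \<Longrightarrow> norm (w ^ dl j) = 1" using w by (simp add: norm_power)
      fix j assume j: "j < k"
      have jk: "Suc j mod k < k" using k by simp
      have "(?A *\<^sub>v v) $ (Suc j mod k) = 0" using v(3) jk by simp
      then have "v $ (Suc j mod k) = a * (Pmat k dl w *\<^sub>v v) $ (Suc j mod k)"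
        using IaP_mv[OF v(1) jk, of a dl w] by simp
      then show "v $ (Suc j mod k) = w ^ dl j * (a * v $ j)"
        using Pmat_mv[OF v(1) j] by simp
    qed
    then have "v = 0\<^sub>v k" using v(1) by (intro eq_vecI) auto
    then show False using v(2) by simp
  qed
  then have "?A \<in> Units (ring_mat TYPE(complex) k ())" by (rule det_non_zero_imp_unit[OF c])
  then show ?thesis by (auto simp: Units_def ring_mat_def)
qed

lemma IaP_sol:
  fixes a b w :: complex
  assumes k: "0 < k" and M: "M \<in> carrier_mat k k" "(1\<^sub>m k - a \<cdot>\<^sub>m Pmat k dl w) * M = 1\<^sub>m k"
    and al: "al \<in> carrier_vec k" and j: "j < k"
  shows "b * (Pmat k dl w *\<^sub>v (M *\<^sub>v al)) $ (Suc j mod k)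
       = w ^ dl j * (a * (b * (Pmat k dl w *\<^sub>v (M *\<^sub>v al)) $ j) + b * al $ j)"
proof -
  let ?P = "Pmat k dl w"
  let ?A = "1\<^sub>m k - a \<cdot>\<^sub>m ?P"
  define m where "m = M *\<^sub>v al"
  have mc: "m \<in> carrier_vec k" using M al by (simp add: m_def)
  have c: "?A \<in> carrier_mat k k" by (intro minus_carrier_mat smult_carrier_mat Pmat_carrier)
  have "?A *\<^sub>v m = al" using M al c by (simp add: m_def assoc_mult_mat_vec[symmetric, OF c M(1) al])
  then have mj: "m $ j = al $ j + a * (?P *\<^sub>v m) $ j" using IaP_mv[OF mc j, of a dl w] by simp
  have "b * (?P *\<^sub>v m) $ (Suc j mod k) = b * (w ^ dl j * m $ j)" using Pmat_mv[OF mc j] by simp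
  also have "\<dots> = w ^ dl j * (a * (b * (?P *\<^sub>v m) $ j) + b * al $ j)" using mj by (simp add: algebra_simps)
  finally show ?thesis by (simp add: m_def)
qed

lemma S_row:
  fixes a b c d w :: complex
  assumes M: "M \<in> carrier_mat k k" and al: "al \<in> carrier_vec k" and i: "i < k"
  shows "(\<Sum>j<k. ((b * c) \<cdot>\<^sub>m (Pmat k dl w * M) + d \<cdot>\<^sub>m 1\<^sub>m k) $$ (i, j) * al $ j)
     = c * (b * (Pmat k dl w *\<^sub>v (M *\<^sub>v al)) $ i) + d * al $ i"
proof -
  let ?P = "Pmat k dl w"
  have PM: "?P * M \<in> carrier_mat k k" using M Pmat_carrier by (metis mult_carrier_mat)
  have "(\<Sum>j<k. ((b * c) \<cdot>\<^sub>m (?P * M) + d \<cdot>\<^sub>m 1\<^sub>m k) $$ (i, j) * al $ j)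
      = (\<Sum>j<k. (b * c) * ((?P * M) $$ (i, j) * al $ j) + (if i = j then d * al $ j else 0))"
    using PM i M by (intro sum.cong) (auto simp: algebra_simps carrier_matD)
  also have "\<dots> = (b * c) * (\<Sum>j<k. (?P * M) $$ (i, j) * al $ j) + d * al $ i"
    using i by (simp add: sum.distrib sum_distrib_left)
  also have "(\<Sum>j<k. (?P * M) $$ (i, j) * al $ j) = ((?P * M) *\<^sub>v al) $ i"
    using mv_index[OF PM al i] by simp
  also have "((?P * M) *\<^sub>v al) = ?P *\<^sub>v (M *\<^sub>v al)" by (rule assoc_mult_mat_vec[OF Pmat_carrier M al])
  finally show ?thesis by (simp add: algebra_simps)
qed



context qw begin

abbreviation "xs \<equiv> xf dV rho"
definition kk :: "'v bvert \<Rightarrow> nat" where "kk x0 = per nx x0"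
definition PPx :: "'v bvert \<Rightarrow> complex mat" where "PPx x0 = Pmat (kk x0) (deltaf dV rho x0) om"
definition MMx :: "'v bvert \<Rightarrow> complex mat" where
  "MMx x0 = (SOME M. M \<in> carrier_mat (kk x0) (kk x0) \<and> (1\<^sub>m (kk x0) - a \<cdot>\<^sub>m PPx x0) * M = 1\<^sub>m (kk x0)
      \<and> M * (1\<^sub>m (kk x0) - a \<cdot>\<^sub>m PPx x0) = 1\<^sub>m (kk x0))"
definition alv :: "('v bvert \<Rightarrow> complex) \<Rightarrow> 'v bvert \<Rightarrow> complex vec" where
  "alv \<alpha> x0 = vec (kk x0) (\<lambda>j. \<alpha> (xs x0 j))"
definition ysol :: "('v bvert \<Rightarrow> complex) \<Rightarrow> 'v bvert \<Rightarrow> nat \<Rightarrow> complex" where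
  "ysol \<alpha> x0 j = b * (PPx x0 *\<^sub>v (MMx x0 *\<^sub>v alv \<alpha> x0)) $ j"
definition Yg :: "('v bvert \<Rightarrow> complex) \<Rightarrow> 'v bvert \<Rightarrow> complex" where
  "Yg \<alpha> x = ysol \<alpha> x 0"

lemma kk_props: assumes "x0 \<in> dB"
  shows "0 < kk x0" "(nx ^^ kk x0) x0 = x0"
  using per_props[of _ nx x0] nx_period[OF assms] by (auto simp: kk_def)

lemma xf_Suc: "xs x0 (Suc j) = nx (xs x0 j)" by (simp add: xf_def)
lemma xf_0: "xs x0 0 = x0" by (simp add: xf_def)
lemma xf_nx: "xs (nx x0) j = xs x0 (Suc j)" by (simp add: xf_def funpow_swap1)
lemma xf_mod: "x0 \<in> dB \<Longrightarrow> xs x0 j = xs x0 (j mod kk x0)"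
  unfolding xf_def using funpow_mod_period kk_props by metis
lemma xf_dB: "x0 \<in> dB \<Longrightarrow> xs x0 j \<in> dB" using bv_reach by (simp add: xf_def)

lemma Cset_nx: assumes "x0 \<in> dB" shows "{(nx ^^ j) (nx x0) | j. True} = {(nx ^^ j) x0 | j. True}"
proof
  show "{(nx ^^ j) (nx x0) | j. True} \<subseteq> {(nx ^^ j) x0 | j. True}"
    by (auto simp: funpow_swap1[symmetric]) (metis funpow.simps(2) o_apply)
  show "{(nx ^^ j) x0 | j. True} \<subseteq> {(nx ^^ j) (nx x0) | j. True}"
  proof
    fix z assume "z \<in> {(nx ^^ j) x0 | j. True}"
    then obtain j where z: "z = (nx ^^ j) x0" by auto
    have "z = (nx ^^ (j + kk x0)) x0" using z kk_props[OF assms] by (simp add: funpow_add)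
    also have "j + kk x0 = Suc (j + kk x0 - 1)" using kk_props[OF assms] by simp
    also have "(nx ^^ Suc (j + kk x0 - 1)) x0 = (nx ^^ (j + kk x0 - 1)) (nx x0)" by (simp add: funpow_swap1)
    finally show "z \<in> {(nx ^^ j) (nx x0) | j. True}" by blast
  qed
qed

lemma kk_card: assumes "x0 \<in> dB" shows "kk x0 = card {(nx ^^ j) x0 | j. True}"
  using per_cycle(3)[of _ nx x0] nx_period[OF assms] by (auto simp: kk_def)

lemma kk_nx: assumes "x0 \<in> dB" shows "kk (nx x0) = kk x0"
proof -
  have "nx x0 \<in> dB" using nx_dB ex_seg_dB assms by blast
  then show ?thesis using kk_card[OF \<open>nx x0 \<in> dB\<close>] kk_card[OF assms] Cset_nx[OF assms] by simp
qed

lemma MMx_props: assumes "x0 \<in> dB"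
  shows "MMx x0 \<in> carrier_mat (kk x0) (kk x0)" "(1\<^sub>m (kk x0) - a \<cdot>\<^sub>m PPx x0) * MMx x0 = 1\<^sub>m (kk x0)"
    "MMx x0 * (1\<^sub>m (kk x0) - a \<cdot>\<^sub>m PPx x0) = 1\<^sub>m (kk x0)"
proof -
  have "\<exists>M \<in> carrier_mat (kk x0) (kk x0). (1\<^sub>m (kk x0) - a \<cdot>\<^sub>m PPx x0) * M = 1\<^sub>m (kk x0)
      \<and> M * (1\<^sub>m (kk x0) - a \<cdot>\<^sub>m PPx x0) = 1\<^sub>m (kk x0)"
    unfolding PPx_def by (rule IaP_inv[OF kk_props(1)[OF assms] norm_a norm_om])
  then have "\<exists>M. M \<in> carrier_mat (kk x0) (kk x0) \<and> (1\<^sub>m (kk x0) - a \<cdot>\<^sub>m PPx x0) * M = 1\<^sub>m (kk x0)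
      \<and> M * (1\<^sub>m (kk x0) - a \<cdot>\<^sub>m PPx x0) = 1\<^sub>m (kk x0)" by blast
  from someI_ex[OF this] show "MMx x0 \<in> carrier_mat (kk x0) (kk x0)" "(1\<^sub>m (kk x0) - a \<cdot>\<^sub>m PPx x0) * MMx x0 = 1\<^sub>m (kk x0)"
    "MMx x0 * (1\<^sub>m (kk x0) - a \<cdot>\<^sub>m PPx x0) = 1\<^sub>m (kk x0)" unfolding MMx_def by blast+
qed

lemma ysol_rec: assumes "x0 \<in> dB" "j < kk x0"
  shows "ysol \<alpha> x0 (Suc j mod kk x0) = om ^ nb (xs x0 j) * (a * ysol \<alpha> x0 j + b * \<alpha> (xs x0 j))"
proof -
  have al: "alv \<alpha> x0 \<in> carrier_vec (kk x0)" by (simp add: alv_def)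
  have "ysol \<alpha> x0 (Suc j mod kk x0) = om ^ deltaf dV rho x0 j * (a * ysol \<alpha> x0 j + b * alv \<alpha> x0 $ j)"
    unfolding ysol_def PPx_def
    by (rule IaP_sol[OF kk_props(1)[OF assms(1)] MMx_props(1,2)[OF assms(1), unfolded PPx_def] al assms(2)])
  then show ?thesis using assms(2) by (simp add: alv_def deltaf_def)
qed

lemma Yrec: assumes x: "x \<in> dB"
  shows "Yg \<alpha> (nx x) = om ^ nb x * (a * Yg \<alpha> x + b * \<alpha> x)"
proof -
  define k where "k = kk x"
  have k: "0 < k" using kk_props[OF x] by (simp add: k_def)
  have x': "nx x \<in> dB" using nx_dB ex_seg_dB x by blast
  have kk': "kk (nx x) = k" using kk_nx[OF x] by (simp add: k_def)
  define u where "u j = ysol \<alpha> x (Suc j mod k)" for j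
  have uu: "\<And>j. j < k \<Longrightarrow> u j = ysol \<alpha> (nx x) j"
  proof (rule cyc_unique[OF k norm_a, where w="\<lambda>j. om ^ nb (xs (nx x) j)" and \<beta>="\<lambda>j. b * \<alpha> (xs (nx x) j)"])
    show "\<And>j. j < k \<Longrightarrow> norm (om ^ nb (xs (nx x) j)) = 1" using norm_om by (simp add: norm_power)
  next
    fix j assume j: "j < k"
    define j' where "j' = Suc j mod k"
    have j': "j' < k" using k by (simp add: j'_def)
    have xe: "xs x j' = xs (nx x) j" unfolding j'_def k_def xf_nx using xf_mod[OF x] by metis
    show "u (Suc j mod k) = om ^ nb (xs (nx x) j) * (a * u j + b * \<alpha> (xs (nx x) j))"
      using ysol_rec[OF x j'[unfolded k_def]] xe unfolding j'_def k_def u_def by simp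
  next
    fix j assume j: "j < k"
    show "ysol \<alpha> (nx x) (Suc j mod k) = om ^ nb (xs (nx x) j) * (a * ysol \<alpha> (nx x) j + b * \<alpha> (xs (nx x) j))"
      using ysol_rec[OF x', of j \<alpha>] j kk' by simp
  qed
  have u0: "u 0 = ysol \<alpha> (nx x) 0" using uu k by blast
  have r0: "ysol \<alpha> x (Suc 0 mod k) = om ^ nb x * (a * ysol \<alpha> x 0 + b * \<alpha> x)"
    using ysol_rec[OF x, of 0 \<alpha>] k xf_0 by (simp add: k_def)
  show ?thesis using u0 r0 by (simp add: Yg_def u_def)
qed

lemma Yg_face: assumes x0: "x0 \<in> dB" and i: "i < kk x0"
  shows "Yg \<alpha> (xs x0 i) = ysol \<alpha> x0 i"
proof -
  have "\<And>j. j < kk x0 \<Longrightarrow> (\<lambda>j. Yg \<alpha> (xs x0 j)) j = ysol \<alpha> x0 j"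
  proof (rule cyc_unique[OF kk_props(1)[OF x0] norm_a, where w="\<lambda>j. om ^ nb (xs x0 j)" and \<beta>="\<lambda>j. b * \<alpha> (xs x0 j)"])
    show "\<And>j. j < kk x0 \<Longrightarrow> norm (om ^ nb (xs x0 j)) = 1" using norm_om by (simp add: norm_power)
  next
    fix j assume j: "j < kk x0"
    have "xs x0 (Suc j mod kk x0) = nx (xs x0 j)" using xf_mod[OF x0, of "Suc j"] xf_Suc by simp
    then show "Yg \<alpha> (xs x0 (Suc j mod kk x0)) = om ^ nb (xs x0 j) * (a * Yg \<alpha> (xs x0 j) + b * \<alpha> (xs x0 j))"
      using Yrec[OF xf_dB[OF x0]] by simp
  next
    fix j assume j: "j < kk x0"
    show "ysol \<alpha> x0 (Suc j mod kk x0) = om ^ nb (xs x0 j) * (a * ysol \<alpha> x0 j + b * \<alpha> (xs x0 j))"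
      using ysol_rec[OF x0 j] .
  qed
  then show ?thesis using i by simp
qed

lemma lim_face: assumes x0: "x0 \<in> dB" and i: "i < kk x0"
  shows "(\<lambda>n. ((Uwalk V adj dV rho a b c d ^^ n) (Psi0 dV \<alpha>)) (TOut (xs x0 i) 0))
     \<longlonglongrightarrow> c * ysol \<alpha> x0 i + d * \<alpha> (xs x0 i)"
proof -
  interpret Y: qwY V adj dV rho a b c d "Yg \<alpha>" \<alpha>
    using sg dVV rot un nz dr Yrec by unfold_locales auto
  have "(\<lambda>n. Y.Psi n (TOut (xs x0 i) 0)) \<longlonglongrightarrow> c * Yg \<alpha> (xs x0 i) + d * \<alpha> (xs x0 i)"
    by (rule Y.out_lim[OF xf_dB[OF x0]])
  then show ?thesis using Yg_face[OF x0 i] by (simp add: Y.Psi_def)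
qed

lemma part2: assumes f: "f \<in> faces_ex V adj dV rho" and x0: "x0 \<in> bverts dV rho f"
  shows "let k = kappa dV rho f; xs = xf dV rho x0; w = - (a * d - b * c);
            P = Pmat k (deltaf dV rho x0) w
        in bij_betw xs {..<k} (bverts dV rho f)
         \<and> (\<exists>M \<in> carrier_mat k k. (1\<^sub>m k - a \<cdot>\<^sub>m P) * M = 1\<^sub>m k \<and> M * (1\<^sub>m k - a \<cdot>\<^sub>m P) = 1\<^sub>m k \<and>
             (let S = (b * c) \<cdot>\<^sub>m (P * M) + d \<cdot>\<^sub>m 1\<^sub>m k in
              \<forall>\<alpha>. \<forall>i<k. (\<lambda>n. ((Uwalk V adj dV rho a b c d ^^ n) (Psi0 dV \<alpha>)) (TOut (xs i) 0))
                         \<longlonglongrightarrow> (\<Sum>j<k. S $$ (i, j) * \<alpha> (xs j))))"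
proof -
  have fF: "f \<in> faces V adj dV rho" using f by (simp add: faces_ex_def)
  have xd: "x0 \<in> dB" using face_of(1)[OF fF x0] .
  have fo: "f = orbit (Isl (mi x0))" using face_of(2)[OF fF x0] .
  have bv: "bverts dV rho f = {(nx ^^ j) x0 | j. True}" using bverts_orbit[OF xd] fo by simp
  have kap: "kappa dV rho f = kk x0" using bv kk_card[OF xd] by (simp add: kappa_def)
  have w: "- (a * d - b * c) = om" by (simp add: om_def)
  have xsd: "xs x0 = (\<lambda>j. (nx ^^ j) x0)" by (simp add: xf_def fun_eq_iff)
  have bij: "bij_betw (xs x0) {..<kk x0} (bverts dV rho f)"
    unfolding xsd bv kk_def using per_cycle(4)[of _ nx x0] nx_period[OF xd] by auto
  have Pe: "Pmat (kk x0) (deltaf dV rho x0) om = PPx x0" by (simp add: PPx_def)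
  note MP = MMx_props[OF xd]
  have lim: "(\<lambda>n. ((Uwalk V adj dV rho a b c d ^^ n) (Psi0 dV \<alpha>)) (TOut (xs x0 i) 0))
        \<longlonglongrightarrow> (\<Sum>j<kk x0. ((b * c) \<cdot>\<^sub>m (PPx x0 * MMx x0) + d \<cdot>\<^sub>m 1\<^sub>m (kk x0)) $$ (i, j) * \<alpha> (xs x0 j))"
    if i: "i < kk x0" for \<alpha> i
  proof -
    have al: "alv \<alpha> x0 \<in> carrier_vec (kk x0)" by (simp add: alv_def)
    have "(\<Sum>j<kk x0. ((b * c) \<cdot>\<^sub>m (PPx x0 * MMx x0) + d \<cdot>\<^sub>m 1\<^sub>m (kk x0)) $$ (i, j) * \<alpha> (xs x0 j))
        = (\<Sum>j<kk x0. ((b * c) \<cdot>\<^sub>m (PPx x0 * MMx x0) + d \<cdot>\<^sub>m 1\<^sub>m (kk x0)) $$ (i, j) * alv \<alpha> x0 $ j)"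
      by (intro sum.cong) (auto simp: alv_def)
    also have "\<dots> = c * ysol \<alpha> x0 i + d * \<alpha> (xs x0 i)"
      unfolding PPx_def ysol_def using S_row[OF MP(1) al i, where dl="deltaf dV rho x0" and w=om and b=b and c=c and d=d] i
      by (simp add: alv_def PPx_def)
    finally show ?thesis using lim_face[OF xd i] by simp
  qed
  show ?thesis unfolding Let_def kap w Pe
    using bij MP lim by blast
qed

end

theorem mainTheorem2:
  fixes V :: "'v set" and adj :: "'v \<Rightarrow> 'v \<Rightarrow> bool" and dV :: "'v set"
    and rho :: "'v \<Rightarrow> 'v port \<Rightarrow> 'v port" and a b c d :: complex
  assumes "simple_graph V adj" and "graph_connected V adj" and "dV \<subseteq> V"
    and "is_rotation V adj dV rho"
    and "unitary2 a b c d" and "a * b * c * d \<noteq> 0" and "d \<in> \<real>"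
  shows "(\<forall>y\<in>dVBU dV. \<exists>!f. f \<in> faces_ex V adj dV rho \<and> y \<in> bverts dV rho f)
    \<and> (\<forall>f\<in>faces_ex V adj dV rho. \<forall>x0\<in>bverts dV rho f.
        let k = kappa dV rho f; xs = xf dV rho x0; w = - (a * d - b * c);
            P = Pmat k (deltaf dV rho x0) w
        in bij_betw xs {..<k} (bverts dV rho f)
         \<and> (\<exists>M \<in> carrier_mat k k. (1\<^sub>m k - a \<cdot>\<^sub>m P) * M = 1\<^sub>m k \<and> M * (1\<^sub>m k - a \<cdot>\<^sub>m P) = 1\<^sub>m k \<and>
             (let S = (b * c) \<cdot>\<^sub>m (P * M) + d \<cdot>\<^sub>m 1\<^sub>m k in
              \<forall>\<alpha>. \<forall>i<k. (\<lambda>n. ((Uwalk V adj dV rho a b c d ^^ n) (Psi0 dV \<alpha>)) (TOut (xs i) 0))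
                         \<longlonglongrightarrow> (\<Sum>j<k. S $$ (i, j) * \<alpha> (xs j)))))"
  proof -
  interpret qw V adj dV rho a b c d using assms by unfold_locales auto
  show ?thesis using part1 part2 by blast
qed

end
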